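(* Let $\nu(x)=\sum_{k\ge0}\nu_kL_k(x)$ and $\sigma(x)=\sum_{k\ge0}\sigma_kL_k(x)$ on $I=(-1,1)$ and, for $m,n\ge2$, let $$a_{m,n}:=\int_{-1}^1\nu\,D\eta_m\,D\eta_n\,dx+\int_{-1}^1\sigma\,\eta_m\,\eta_n\,dx.$$ If there exist $\eta>0$ and a constant $C_\eta>0$ depending only on $\eta$ such that $|\nu_k|,|\sigma_k|\le C_\eta e^{-\eta k}$ for all $k\ge0$, then $|a_{m,n}|\le Ce^{-\eta|n-m|}$ for all $n,m\ge2$, where $C$ is a constant depending only on $\eta$.
   Context: $I=(-1,1)$, $D=d/dx$. $L_k$ denotes the Legendre polynomial of degree $k$ with $L_k(1)=1$. The Babuška–Shen basis is $\eta_k(x)=\frac{1}{\sqrt{4k-2}}(L_{k-2}(x)-L_k(x))$, $k\ge2$. *)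

theory Defs
  imports "HOL-Analysis.Analysis"
begin

text \<open>Legendre polynomials normalised by L_k(1) = 1, via Bonnet's recurrence
  (n+2) L_{n+2}(x) = (2n+3) x L_{n+1}(x) - (n+1) L_n(x).\<close>
fun legendre :: "nat \<Rightarrow> real \<Rightarrow> real" where
  "legendre 0 x = 1"
| "legendre (Suc 0) x = x"
| "legendre (Suc (Suc n)) x =
     ((2 * real n + 3) * x * legendre (Suc n) x - (real n + 1) * legendre n x) / (real n + 2)"

definition bs_eta :: "nat \<Rightarrow> real \<Rightarrow> real" where
  "bs_eta k x = (legendre (k - 2) x - legendre k x) / sqrt (4 * real k - 2)"

definition legendre_series :: "(nat \<Rightarrow> real) \<Rightarrow> real \<Rightarrow> real" where
  "legendre_series c x = (\<Sum>k. c k * legendre k x)"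

definition a_entry :: "(nat \<Rightarrow> real) \<Rightarrow> (nat \<Rightarrow> real) \<Rightarrow> nat \<Rightarrow> nat \<Rightarrow> real" where
  "a_entry \<nu> \<sigma> m n =
     integral {-1..1} (\<lambda>x. legendre_series \<nu> x * deriv (bs_eta m) x * deriv (bs_eta n) x)
   + integral {-1..1} (\<lambda>x. legendre_series \<sigma> x * bs_eta m x * bs_eta n x)"

end

theory Submission
  imports Defs "HOL-Computational_Algebra.Polynomial"
begin

lemma leg_SS: "legendre (Suc (Suc n)) x =
     ((2 * real n + 3) * x * legendre (Suc n) x - (real n + 1) * legendre n x) / (real n + 2)"
  by simp

lemma leg_SS': "(real n + 2) * legendre (Suc (Suc n)) x =
     (2 * real n + 3) * x * legendre (Suc n) x - (real n + 1) * legendre n x"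
proof -
  have "real n + 2 \<noteq> 0" by simp
  then show ?thesis by (simp only: leg_SS) (simp add: field_simps)
qed

declare legendre.simps(3)[simp del]

lemma leg_one_aux: "x = 1 \<Longrightarrow> legendre n x = 1"
  by (induction n x rule: legendre.induct) (simp_all add: field_simps legendre.simps)

lemma leg_one: "legendre n 1 = 1" by (rule leg_one_aux) simp

lemma leg_mone_aux: "x = -1 \<Longrightarrow> legendre n x = (-1)^n"
  by (induction n x rule: legendre.induct) (simp_all add: field_simps legendre.simps)

lemma leg_mone: "legendre n (-1) = (-1)^n" by (rule leg_mone_aux) simp

lemma xleg: "x * legendre n x = ((real n + 1) * legendre (Suc n) x + real n * legendre (n - 1) x) / (2 * real n + 1)"
proof (cases n)
  case 0 then show ?thesis by simp
next
  case (Suc k)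
  have "(real k + 2) * legendre (Suc (Suc k)) x + (real k + 1) * legendre k x = (2 * real k + 3) * (x * legendre (Suc k) x)"
    using leg_SS'[of k x] by (simp add: algebra_simps)
  moreover have "(2 * real k + 3) \<noteq> 0" by simp
  ultimately show ?thesis using Suc by (simp add: field_simps)
qed

fun ld :: "nat \<Rightarrow> real \<Rightarrow> real" where
  "ld 0 x = 0"
| "ld (Suc 0) x = 1"
| "ld (Suc (Suc n)) x =
     ((2 * real n + 3) * (legendre (Suc n) x + x * ld (Suc n) x) - (real n + 1) * ld n x) / (real n + 2)"

declare ld.simps(3)[simp del]

lemma ld_SS': "(real n + 2) * ld (Suc (Suc n)) x =
     (2 * real n + 3) * (legendre (Suc n) x + x * ld (Suc n) x) - (real n + 1) * ld n x"
proof -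
  have "real n + 2 \<noteq> 0" by simp
  then show ?thesis by (simp only: ld.simps) (simp add: field_simps)
qed

lemma ld_A_aux: assumes B: "ld n x = x * ld (Suc n) x - (real n + 1) * legendre (Suc n) x"
  shows "ld (Suc (Suc n)) x = (real n + 2) * legendre (Suc n) x + x * ld (Suc n) x"
proof -
  have "(real n + 2) * ld (Suc (Suc n)) x = (real n + 2) * ((real n + 2) * legendre (Suc n) x + x * ld (Suc n) x)"
    unfolding ld_SS' B by (simp add: algebra_simps power2_eq_square)
  then show ?thesis by simp
qed

lemma leg_deriv: "(legendre n has_real_derivative ld n x) (at x)"
proof (induction n x rule: legendre.induct)
  case (1 x) then show ?case by simp
next
  case (2 x) then show ?case by simp
next
  case (3 n x)
  have "((\<lambda>x. (2 * real n + 3) * x * legendre (Suc n) x - (real n + 1) * legendre n x)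
     has_real_derivative (2 * real n + 3) * (legendre (Suc n) x + x * ld (Suc n) x) - (real n + 1) * ld n x) (at x)"
    by (auto intro!: derivative_eq_intros 3 simp: algebra_simps)
  then have "((\<lambda>x. ((2 * real n + 3) * x * legendre (Suc n) x - (real n + 1) * legendre n x) / (real n + 2))
     has_real_derivative ((2 * real n + 3) * (legendre (Suc n) x + x * ld (Suc n) x) - (real n + 1) * ld n x) / (real n + 2)) (at x)"
    by (rule DERIV_cdivide)
  then show ?case by (simp add: leg_SS[abs_def] ld.simps)
qed

lemma ld_BC: "x * ld (Suc n) x - ld n x = (real n + 1) * legendre (Suc n) x \<and>
   (x^2 - 1) * ld (Suc n) x = (real n + 1) * (x * legendre (Suc n) x - legendre n x)"
proof (induction n)
  case 0 then show ?case by (simp add: power2_eq_square)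
next
  case (Suc n)
  have B: "ld n x = x * ld (Suc n) x - (real n + 1) * legendre (Suc n) x" using Suc by simp
  have C: "(x^2 - 1) * ld (Suc n) x = (real n + 1) * (x * legendre (Suc n) x - legendre n x)" using Suc by simp
  have A: "ld (Suc (Suc n)) x = (real n + 2) * legendre (Suc n) x + x * ld (Suc n) x"
    by (rule ld_A_aux[OF B])
  have L: "legendre (Suc (Suc n)) x * (real n + 2) = (2 * real n + 3) * x * legendre (Suc n) x - (real n + 1) * legendre n x"
    using leg_SS'[of n x] by (simp add: algebra_simps)
  show ?case
  proof
    show "x * ld (Suc (Suc n)) x - ld (Suc n) x = (real (Suc n) + 1) * legendre (Suc (Suc n)) x"
    proof -
      have "x * ld (Suc (Suc n)) x - ld (Suc n) x = (real n + 2) * x * legendre (Suc n) x + (x^2-1) * ld (Suc n) x"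
        by (simp add: A algebra_simps power2_eq_square)
      also have "\<dots> = legendre (Suc (Suc n)) x * (real n + 2)"
        unfolding C L by (simp add: algebra_simps)
      finally show ?thesis by (simp add: algebra_simps)
    qed
    show "(x^2 - 1) * ld (Suc (Suc n)) x = (real (Suc n) + 1) * (x * legendre (Suc (Suc n)) x - legendre (Suc n) x)"
    proof -
      have "(x^2 - 1) * ld (Suc (Suc n)) x = (x^2-1) * (real n + 2) * legendre (Suc n) x + x * ((x^2 - 1) * ld (Suc n) x)"
        by (simp add: A algebra_simps)
      also have "\<dots> = (x^2-1) * (real n + 2) * legendre (Suc n) x + x * ((real n + 1) * (x * legendre (Suc n) x - legendre n x))"
        unfolding C ..
      also have "\<dots> = x * (legendre (Suc (Suc n)) x * (real n + 2)) - (real n + 2) * legendre (Suc n) x"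
        unfolding L by (simp add: algebra_simps power2_eq_square)
      finally show ?thesis by (simp add: algebra_simps)
    qed
  qed
qed

lemma ld_diff: "ld (Suc (Suc n)) x - ld n x = (2 * real n + 3) * legendre (Suc n) x"
proof -
  have B: "ld n x = x * ld (Suc n) x - (real n + 1) * legendre (Suc n) x" using ld_BC[of x n] by simp
  have A: "ld (Suc (Suc n)) x = (real n + 2) * legendre (Suc n) x + x * ld (Suc n) x"
    by (rule ld_A_aux[OF B])
  show ?thesis by (simp add: A B algebra_simps)
qed

fun lpoly :: "nat \<Rightarrow> real poly" where
  "lpoly 0 = 1"
| "lpoly (Suc 0) = [:0, 1:]"
| "lpoly (Suc (Suc n)) = smult (1 / (real n + 2))
     (smult (2 * real n + 3) (pCons 0 (lpoly (Suc n))) - smult (real n + 1) (lpoly n))"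

lemma poly_lpoly: "poly (lpoly n) x = legendre n x"
  by (induction n rule: lpoly.induct) (simp_all add: legendre.simps field_simps)

lemma degree_lpoly: "degree (lpoly n) \<le> n"
proof (induction n rule: lpoly.induct)
  case 1 then show ?case by simp
next
  case 2 then show ?case by simp
next
  case (3 n)
  have a: "degree (smult (2 * real n + 3) (pCons 0 (lpoly (Suc n)))) \<le> Suc (Suc n)"
    using 3(1) by (metis degree_pCons_le degree_smult_le le_trans Suc_le_mono)
  have b: "degree (smult (real n + 1) (lpoly n)) \<le> Suc (Suc n)"
    using 3(2) degree_smult_le le_trans by fastforce
  show ?case using degree_diff_le[OF a b] by (simp add: le_trans[OF degree_smult_le])
qed

lemma leg_poly_fun: "legendre n = poly (lpoly n)"
  by (simp add: fun_eq_iff poly_lpoly)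

lemma cont_leg [continuous_intros]: "continuous_on S f \<Longrightarrow> continuous_on S (\<lambda>x. legendre n (f x))"
  unfolding leg_poly_fun by (intro continuous_intros)

lemma int11: "continuous_on {-1..1} f \<Longrightarrow> (f :: real \<Rightarrow> real) integrable_on {-1..1}"
  by (rule integrable_continuous_interval)

lemma intLp: "(\<lambda>x. poly p x * legendre n x) integrable_on {-1..1}"
  by (rule int11) (intro continuous_intros)

lemma int_lin2: "f integrable_on S \<Longrightarrow> g integrable_on S \<Longrightarrow>
  integral S (\<lambda>x. (a::real) * f x + b * g x) = a * integral S f + b * integral S g"
  by (subst integral_add) (auto intro: integrable_on_mult_right)

lemma int_lin3: "f integrable_on S \<Longrightarrow> g integrable_on S \<Longrightarrow> h integrable_on S \<Longrightarrow>
  integral S (\<lambda>x. (a::real) * f x + b * g x - c * h x) = a * integral S f + b * integral S g - c * integral S h"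
  by (subst integral_diff integral_add, (auto intro!: integrable_on_mult_right integrable_add)[2])+ simp

lemma lin2: "(y::real) * ((p * A + q * B) / r) = (p / r) * (y * A) + (q / r) * (y * B)"
  by (simp add: add_divide_distrib ring_distribs ac_simps)

lemma moment: assumes "n \<ge> 1" shows "integral {-1..1} (legendre n) = 0"
proof -
  obtain k where n: "n = Suc k" using assms by (cases n) auto
  define F where "F x = (legendre (Suc (Suc k)) x - legendre k x) / (2 * real k + 3)" for x
  have "(F has_real_derivative legendre n x) (at x)" for x
  proof -
    have "(F has_real_derivative (ld (Suc (Suc k)) x - ld k x) / (2 * real k + 3)) (at x)"
      unfolding F_def by (intro DERIV_cdivide DERIV_diff leg_deriv)
    then show ?thesis using ld_diff[of k x] n by simp
  qed
  then have "(legendre n has_integral (F 1 - F (-1))) {-1..1}"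
    by (intro fundamental_theorem_of_calculus)
       (auto simp: has_real_derivative_iff_has_vector_derivative intro: has_vector_derivative_at_within)
  moreover have "F 1 - F (-1) = 0" unfolding F_def by (simp add: leg_one leg_mone)
  ultimately show ?thesis by (simp add: integral_unique)
qed

lemma monomial_orth: "\<forall>b>j. integral {-1..1} (\<lambda>x. x ^ j * legendre b x) = 0"
proof (induction j)
  case 0 then show ?case using moment by simp
next
  case (Suc j)
  show ?case
  proof (intro allI impI)
    fix b assume b: "Suc j < b"
    have "integral {-1..1} (\<lambda>x. x ^ Suc j * legendre b x) =
      integral {-1..1} (\<lambda>x. ((real b + 1) / (2 * real b + 1)) * (x ^ j * legendre (Suc b) x)
          + (real b / (2 * real b + 1)) * (x ^ j * legendre (b - 1) x))"
    proof (rule integral_cong)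
      fix x :: real
      have "x ^ Suc j * legendre b x = x ^ j * (x * legendre b x)" by simp
      also have "\<dots> = ((real b + 1) / (2 * real b + 1)) * (x ^ j * legendre (Suc b) x)
          + (real b / (2 * real b + 1)) * (x ^ j * legendre (b - 1) x)"
        unfolding xleg by (rule lin2)
      finally show "x ^ Suc j * legendre b x = \<dots>" .
    qed
    also have "\<dots> = ((real b + 1) / (2 * real b + 1)) * integral {-1..1} (\<lambda>x. x ^ j * legendre (Suc b) x)
          + (real b / (2 * real b + 1)) * integral {-1..1} (\<lambda>x. x ^ j * legendre (b - 1) x)"
      by (rule int_lin2) (auto intro!: int11 continuous_intros)
    also have "\<dots> = 0" using Suc.IH b by simp
    finally show "integral {-1..1} (\<lambda>x. x ^ Suc j * legendre b x) = 0" .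
  qed
qed

lemma poly_orth: assumes "degree p < b"
  shows "integral {-1..1} (\<lambda>x. poly p x * legendre b x) = 0"
proof -
  have "integral {-1..1} (\<lambda>x. poly p x * legendre b x) =
        integral {-1..1} (\<lambda>x. \<Sum>i\<le>degree p. coeff p i * (x ^ i * legendre b x))"
    by (rule integral_cong) (simp add: poly_altdef sum_distrib_right mult.assoc)
  also have "\<dots> = (\<Sum>i\<le>degree p. integral {-1..1} (\<lambda>x. coeff p i * (x ^ i * legendre b x)))"
    by (rule integral_sum) (auto intro!: int11 continuous_intros)
  also have "\<dots> = 0"
    using monomial_orth assms by (intro sum.neutral) auto
  finally show ?thesis .
qed

lemma leg_orth: assumes "a < b" shows "integral {-1..1} (\<lambda>x. legendre a x * legendre b x) = 0"
  using poly_orth[of "lpoly a" b] degree_lpoly[of a] assms by (simp add: poly_lpoly)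

lemma aux1: "(p::real) \<noteq> 0 \<Longrightarrow> q \<noteq> 0 \<Longrightarrow>
   p * q * (r / p * (s / q * X + p / q * Y) - t / p * Z) = r * (s * X + p * Y) - q * t * Z"
  by (simp add: field_simps)

lemma aux2: "(a::real) \<noteq> 0 \<Longrightarrow> b \<noteq> 0 \<Longrightarrow> c \<noteq> 0 \<Longrightarrow> a / b * (b / c) * (2 / a) = 2 / c"
  by (simp add: field_simps)

lemma leg_sq_pt0:
  "legendre (Suc k) x ^ 2 = (2 * real k + 1) / (real k + 1) * ((real k + 2) / (2 * real k + 3) * (legendre k x * legendre (Suc (Suc k)) x)
     + (real k + 1) / (2 * real k + 3) * legendre k x ^ 2) - real k / (real k + 1) * (legendre (k - 1) x * legendre (Suc k) x)"
proof -
  have nz: "real k + 1 \<noteq> 0" "2 * real k + 3 \<noteq> 0" "2 * real k + 1 \<noteq> 0" by linarith+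
  define a where "a = legendre (Suc k) x"
  define b where "b = legendre k x"
  define c where "c = legendre (k - 1) x"
  define d where "d = legendre (Suc (Suc k)) x"
  have f1: "(real k + 1) * a = (2 * real k + 1) * x * b - real k * c"
    using xleg[of x k] unfolding a_def b_def c_def by (simp add: field_simps)
  have f2: "(2 * real k + 3) * (x * a) = (real k + 2) * d + (real k + 1) * b"
    using xleg[of x "Suc k"] unfolding a_def b_def d_def by (simp add: field_simps)
  have "(real k + 1) * (2 * real k + 3) * a ^ 2 = (real k + 1) * (2 * real k + 3) * ((2 * real k + 1) / (real k + 1) * ((real k + 2) / (2 * real k + 3) * (b * d)
     + (real k + 1) / (2 * real k + 3) * b ^ 2) - real k / (real k + 1) * (c * a))"
  proof -
    have "(real k + 1) * (2 * real k + 3) * ((2 * real k + 1) / (real k + 1) * ((real k + 2) / (2 * real k + 3) * (b * d)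
     + (real k + 1) / (2 * real k + 3) * b ^ 2) - real k / (real k + 1) * (c * a))
      = (2 * real k + 1) * b * ((real k + 2) * d + (real k + 1) * b) - (2 * real k + 3) * real k * c * a"
      using aux1[OF nz(1,2), of "2 * real k + 1" "real k + 2" "b * d" "b ^ 2" "real k" "c * a"]
      by (simp add: algebra_simps power2_eq_square)
    also have "\<dots> = (2 * real k + 1) * b * ((2 * real k + 3) * (x * a)) - (2 * real k + 3) * real k * c * a"
      unfolding f2 ..
    also have "\<dots> = (2 * real k + 3) * a * ((2 * real k + 1) * x * b - real k * c)"
      by (simp add: algebra_simps)
    also have "\<dots> = (2 * real k + 3) * a * ((real k + 1) * a)" unfolding f1 ..
    finally show ?thesis by (simp add: algebra_simps power2_eq_square)
  qed
  then show ?thesis unfolding a_def b_def c_def d_def by simp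
qed

lemma leg_sq_pt:
  "legendre (Suc k) x ^ 2 = ((2 * real k + 1) / (real k + 1) * ((real k + 2) / (2 * real k + 3))) * (legendre k x * legendre (Suc (Suc k)) x)
     + ((2 * real k + 1) / (real k + 1) * ((real k + 1) / (2 * real k + 3))) * legendre k x ^ 2 - (real k / (real k + 1)) * (legendre (k - 1) x * legendre (Suc k) x)"
  unfolding leg_sq_pt0 by (simp only: distrib_left mult.assoc)

lemma leg_norm: "integral {-1..1} (\<lambda>x. legendre n x ^ 2) = 2 / (2 * real n + 1)"
proof (induction n)
  case 0 then show ?case by simp
next
  case (Suc k)
  have "integral {-1..1} (\<lambda>x. legendre (Suc k) x ^ 2) =
     ((2 * real k + 1) / (real k + 1) * ((real k + 2) / (2 * real k + 3))) * integral {-1..1} (\<lambda>x. legendre k x * legendre (Suc (Suc k)) x)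
     + ((2 * real k + 1) / (real k + 1) * ((real k + 1) / (2 * real k + 3))) * integral {-1..1} (\<lambda>x. legendre k x ^ 2) - (real k / (real k + 1)) * integral {-1..1} (\<lambda>x. legendre (k - 1) x * legendre (Suc k) x)"
    unfolding leg_sq_pt
    by (rule int_lin3) (auto intro!: int11 continuous_intros)
  also have "\<dots> = ((2 * real k + 1) / (real k + 1) * ((real k + 1) / (2 * real k + 3))) * (2 / (2 * real k + 1))"
    using leg_orth[of k "Suc (Suc k)"] leg_orth[of "k - 1" "Suc k"] Suc.IH by simp
  also have "\<dots> = 2 / (2 * real (Suc k) + 1)"
  proof -
    have nz: "real k + 1 \<noteq> 0" "2 * real k + 3 \<noteq> 0" "2 * real k + 1 \<noteq> 0" by linarith+
    then show ?thesis using aux2[OF nz(3,1,2)] by simp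
  qed
  finally show ?case .
qed

definition Gf :: "nat \<Rightarrow> real \<Rightarrow> real" where
  "Gf n x = (1 - x^2) * legendre (Suc n) x ^ 2 + (real n + 1) / (real n + 2) * (legendre n x - x * legendre (Suc n) x) ^ 2"

lemma aux3: "(p::real) > 0 \<Longrightarrow> q > 0 \<Longrightarrow> p / q * D^2 = q / p * (p * D / q)^2"
  by (simp add: field_simps power2_eq_square)

lemma G_step: "Gf (Suc n) x \<le> Gf n x"
proof -
  define u where "u = legendre (Suc n) x"
  define v where "v = legendre n x"
  define w where "w = legendre (Suc (Suc n)) x"
  define e where "e = (real n + 1) * (v - x * u) / (real n + 2)"
  define s where "s = 1 - x^2"
  have h1: "w = x * u - e"
  proof -
    have he: "(real n + 2) * e = (real n + 1) * (v - x * u)" unfolding e_def by simp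
    have "(real n + 2) * w = (real n + 2) * (x * u) - (real n + 2) * e"
      unfolding he w_def leg_SS' u_def v_def by (simp add: algebra_simps)
    then have "(real n + 2) * w = (real n + 2) * (x * u - e)" by (simp add: right_diff_distrib)
    then show ?thesis by simp
  qed
  have h2: "(real n + 1) / (real n + 2) * (v - x * u)^2 = (real n + 2) / (real n + 1) * e^2"
    unfolding e_def by (rule aux3) auto
  have h3: "s * u^2 + e^2 = s * (x * u - e)^2 + (s * u + x * e)^2"
    unfolding s_def by (simp add: algebra_simps power2_eq_square)
  have h4: "u - x * w = s * u + x * e" unfolding h1 s_def by (simp add: algebra_simps power2_eq_square)
  have "Gf (Suc n) x = s * w^2 + (real n + 2) / (real n + 3) * (u - x * w)^2"
    unfolding Gf_def u_def w_def s_def by (simp add: add.commute)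
  also have "\<dots> = s * (x * u - e)^2 + (real n + 2) / (real n + 3) * (s * u + x * e)^2"
    unfolding h4 by (simp only: h1)
  also have "\<dots> \<le> s * (x * u - e)^2 + 1 * (s * u + x * e)^2"
    by (intro add_left_mono mult_right_mono) auto
  also have "\<dots> = s * u^2 + 1 * e^2" using h3 by simp
  also have "\<dots> \<le> s * u^2 + (real n + 2) / (real n + 1) * e^2"
    by (intro add_left_mono mult_right_mono) auto
  also have "\<dots> = Gf n x"
    unfolding Gf_def h2[symmetric] u_def v_def s_def ..
  finally show ?thesis .
qed

lemma G_le0: "Gf n x \<le> Gf 0 x"
  by (induction n) (auto intro: order.trans[OF G_step])

lemma leg_bound: assumes "x \<in> {-1..1}" shows "\<bar>legendre n x\<bar> \<le> 1"
proof (cases n)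
  case 0 then show ?thesis by simp
next
  case (Suc k)
  show ?thesis
  proof (cases "x = 1 \<or> x = -1")
    case True then show ?thesis by (auto simp: leg_one leg_mone)
  next
    case False
    then have s: "1 - x^2 > 0" using assms by (auto simp: abs_square_less_1 abs_less_iff)
    have "(1 - x^2) * legendre (Suc k) x ^ 2 \<le> Gf k x" unfolding Gf_def by simp
    also have "\<dots> \<le> Gf 0 x" by (rule G_le0)
    also have "\<dots> = (1 - x^2) * ((1 + x^2) / 2)" unfolding Gf_def by (simp add: field_simps power2_eq_square)
    also have "\<dots> \<le> (1 - x^2) * 1" using s assms by (intro mult_left_mono) (auto simp: abs_square_le_1)
    finally have "legendre (Suc k) x ^ 2 \<le> 1" using s by simp
    then show ?thesis using Suc by (simp add: abs_square_le_1)
  qed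
qed

lemma deriv_bs: "deriv (bs_eta (Suc (Suc k))) = (\<lambda>x. - ((2 * real k + 3) / sqrt (4 * real (Suc (Suc k)) - 2)) * legendre (Suc k) x)"
proof
  fix x
  have "(bs_eta (Suc (Suc k)) has_real_derivative (ld k x - ld (Suc (Suc k)) x) / sqrt (4 * real (Suc (Suc k)) - 2)) (at x)"
    unfolding bs_eta_def[abs_def] by (auto intro!: DERIV_cdivide DERIV_diff leg_deriv)
  moreover have "(ld k x - ld (Suc (Suc k)) x) / sqrt (4 * real (Suc (Suc k)) - 2) = - ((2 * real k + 3) / sqrt (4 * real (Suc (Suc k)) - 2)) * legendre (Suc k) x"
    using ld_diff[of k x] by (simp add: field_simps)
  ultimately show "deriv (bs_eta (Suc (Suc k))) x = - ((2 * real k + 3) / sqrt (4 * real (Suc (Suc k)) - 2)) * legendre (Suc k) x"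
    using DERIV_imp_deriv by metis
qed

lemma key:
  fixes c g h :: "_ \<Rightarrow> real" and M r :: real and K :: nat
  assumes M: "M \<ge> 0" and r: "0 \<le> r" "r < 1"
    and cb: "\<And>k. \<bar>c k\<bar> \<le> M * r ^ k"
    and gc: "continuous_on {-1..1} g" and hc: "continuous_on {-1..1} h"
    and gh: "\<And>x. x \<in> {-1..1} \<Longrightarrow> \<bar>g x\<bar> \<le> h x"
    and orth: "\<And>k. k < K \<Longrightarrow> integral {-1..1} (\<lambda>x. legendre k x * g x) = 0"
  shows "\<bar>integral {-1..1} (\<lambda>x. legendre_series c x * g x)\<bar> \<le> M * r ^ K / (1 - r) * integral {-1..1} h"
proof -
  define S where "S = legendre_series c"
  define B where "B = M * r ^ K / (1 - r)"
  have B0: "B \<ge> 0" unfolding B_def using M r by auto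
  have tb: "norm (c k * legendre k x) \<le> M * r ^ k" if "x \<in> {-1..1}" for k x
  proof -
    have "\<bar>c k\<bar> * \<bar>legendre k x\<bar> \<le> (M * r ^ k) * 1"
      using cb[of k] leg_bound[OF that, of k] by (intro mult_mono) auto
    then show ?thesis by (simp add: abs_mult)
  qed
  have sg: "summable (\<lambda>k. M * r ^ k)" using r by (intro summable_mult summable_geometric) auto
  have sx: "summable (\<lambda>k. c k * legendre k x)" if "x \<in> {-1..1}" for x
    by (rule summable_comparison_test[OF _ sg]) (use tb[OF that] in auto)
  have ul: "uniform_limit {-1..1} (\<lambda>n x. \<Sum>k<n. c k * legendre k x) S sequentially"
    unfolding S_def legendre_series_def[abs_def]
    by (rule Weierstrass_m_test_ev[OF _ sg]) (use tb in auto)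
  have contS: "continuous_on {-1..1} S"
    by (rule uniform_limit_theorem[OF _ ul]) (auto intro!: always_eventually continuous_intros)
  define P where "P x = (\<Sum>k<K. c k * legendre k x)" for x
  have contP: "continuous_on {-1..1} P" unfolding P_def by (intro continuous_intros)
  have tail: "\<bar>S x - P x\<bar> \<le> B" if x: "x \<in> {-1..1}" for x
  proof -
    have "S x = (\<Sum>j. c (j + K) * legendre (j + K) x) + P x"
      unfolding S_def legendre_series_def P_def by (rule suminf_split_initial_segment[OF sx[OF x]])
    then have eq: "S x - P x = (\<Sum>j. c (j + K) * legendre (j + K) x)" by simp
    have sg2: "summable (\<lambda>j. M * r ^ K * r ^ j)" using r by (intro summable_mult summable_geometric) auto
    have tb2: "norm (c (j + K) * legendre (j + K) x) \<le> M * r ^ K * r ^ j" for j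
      using tb[OF x, of "j + K"] by (simp add: power_add mult_ac)
    have sn: "summable (\<lambda>j. norm (c (j + K) * legendre (j + K) x))"
      by (rule summable_comparison_test[OF _ sg2]) (use tb2 in auto)
    have "\<bar>S x - P x\<bar> \<le> (\<Sum>j. norm (c (j + K) * legendre (j + K) x))"
      unfolding eq using summable_norm[OF sn] by simp
    also have "\<dots> \<le> (\<Sum>j. M * r ^ K * r ^ j)"
      by (rule suminf_le[OF tb2 sn sg2])
    also have "\<dots> = M * r ^ K * (1 / (1 - r))"
      using r by (simp add: suminf_mult suminf_geometric)
    also have "\<dots> = B" unfolding B_def by simp
    finally show ?thesis .
  qed
  have intP: "integral {-1..1} (\<lambda>x. P x * g x) = 0"
  proof -
    have "integral {-1..1} (\<lambda>x. P x * g x) = integral {-1..1} (\<lambda>x. \<Sum>k<K. c k * (legendre k x * g x))"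
      unfolding P_def by (simp add: sum_distrib_right mult.assoc)
    also have "\<dots> = (\<Sum>k<K. integral {-1..1} (\<lambda>x. c k * (legendre k x * g x)))"
      by (rule integral_sum) (auto intro!: int11 continuous_intros gc)
    also have "\<dots> = 0" using orth by simp
    finally show ?thesis .
  qed
  have "integral {-1..1} (\<lambda>x. S x * g x) = integral {-1..1} (\<lambda>x. (S x - P x) * g x + P x * g x)"
    by (simp add: algebra_simps)
  also have "\<dots> = integral {-1..1} (\<lambda>x. (S x - P x) * g x) + integral {-1..1} (\<lambda>x. P x * g x)"
    by (rule integral_add) (auto intro!: int11 continuous_intros gc contS contP)
  finally have split: "integral {-1..1} (\<lambda>x. S x * g x) = integral {-1..1} (\<lambda>x. (S x - P x) * g x)"
    using intP by simp
  have "norm (integral {-1..1} (\<lambda>x. (S x - P x) * g x)) \<le> integral {-1..1} (\<lambda>x. B * h x)"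
  proof (rule integral_norm_bound_integral)
    show "(\<lambda>x. (S x - P x) * g x) integrable_on {-1..1}"
      by (auto intro!: int11 continuous_intros gc contS contP)
    show "(\<lambda>x. B * h x) integrable_on {-1..1}"
      by (auto intro!: int11 continuous_intros hc)
    fix x :: real assume x: "x \<in> {-1..1}"
    have "\<bar>S x - P x\<bar> * \<bar>g x\<bar> \<le> B * h x"
      using tail[OF x] gh[OF x] B0 by (intro mult_mono) auto
    then show "norm ((S x - P x) * g x) \<le> B * h x" by (simp add: abs_mult)
  qed
  then show ?thesis unfolding S_def[symmetric] split B_def[symmetric] by simp
qed

lemma amgm: "\<bar>(p::real) * q\<bar> \<le> (p^2 + q^2) / 2"
proof -
  have "0 \<le> (p - q)^2" "0 \<le> (p + q)^2" by auto
  then show ?thesis by (auto simp: abs_if power2_eq_square algebra_simps)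
qed

definition cf :: "nat \<Rightarrow> real" where
  "cf a = (2 * real a + 3) / sqrt (4 * real (Suc (Suc a)) - 2)"

lemma sq_half: "(t::real) > 0 \<Longrightarrow> t^2 / (2 * t) = t / 2"
  by (simp add: power2_eq_square)

lemma deriv_bs': "deriv (bs_eta (Suc (Suc k))) = (\<lambda>x. - cf k * legendre (Suc k) x)"
  unfolding deriv_bs cf_def by simp

lemma cf_sq: "cf a ^ 2 = (2 * real a + 3) / 2"
proof -
  have "cf a ^ 2 = (2 * real a + 3)^2 / (4 * real (Suc (Suc a)) - 2)"
    unfolding cf_def by (simp add: power_divide)
  also have "\<dots> = (2 * real a + 3)^2 / (2 * (2 * real a + 3))" by (simp add: algebra_simps)
  also have "\<dots> = (2 * real a + 3) / 2"
    using sq_half[of "2 * real a + 3"] by simp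
  finally show ?thesis .
qed

lemma stiff_bound:
  fixes c :: "nat \<Rightarrow> real" and M r :: real
  assumes M: "M \<ge> 0" and r: "0 \<le> r" "r < 1" and cb: "\<And>k. \<bar>c k\<bar> \<le> M * r ^ k"
    and ab: "a \<le> b"
  shows "\<bar>integral {-1..1} (\<lambda>x. legendre_series c x * deriv (bs_eta (Suc (Suc a))) x * deriv (bs_eta (Suc (Suc b))) x)\<bar>
     \<le> M * r ^ (b - a) / (1 - r)"
proof -
  define g where "g x = (cf a * cf b) * (legendre (Suc a) x * legendre (Suc b) x)" for x
  define h where "h x = (cf a ^ 2 / 2) * legendre (Suc a) x ^ 2 + (cf b ^ 2 / 2) * legendre (Suc b) x ^ 2" for x
  have eq: "(\<lambda>x. legendre_series c x * deriv (bs_eta (Suc (Suc a))) x * deriv (bs_eta (Suc (Suc b))) x)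
      = (\<lambda>x. legendre_series c x * g x)"
    unfolding deriv_bs' g_def by (simp add: fun_eq_iff mult_ac)
  have hi: "integral {-1..1} h = 1"
  proof -
    have "integral {-1..1} h = (cf a ^ 2 / 2) * integral {-1..1} (\<lambda>x. legendre (Suc a) x ^ 2)
        + (cf b ^ 2 / 2) * integral {-1..1} (\<lambda>x. legendre (Suc b) x ^ 2)"
      unfolding h_def[abs_def] by (rule int_lin2) (auto intro!: int11 continuous_intros)
    also have "\<dots> = 1"
    proof -
      have *: "t > 0 \<Longrightarrow> t / 2 / 2 * (2 / t) = 1/2" for t :: real by (simp add: field_simps)
      have e: "2 * real (Suc a) + 1 = 2 * real a + 3" "2 * real (Suc b) + 1 = 2 * real b + 3" by simp_all
      have ea: "(2 * real a + 3) / 2 / 2 * (2 / (2 * real a + 3)) = 1/2" by (rule *) simp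
      have eb: "(2 * real b + 3) / 2 / 2 * (2 / (2 * real b + 3)) = 1/2" by (rule *) simp
      show ?thesis unfolding leg_norm cf_sq e ea eb by simp
    qed
    finally show ?thesis .
  qed
  have "\<bar>integral {-1..1} (\<lambda>x. legendre_series c x * g x)\<bar> \<le> M * r ^ (b - a) / (1 - r) * integral {-1..1} h"
  proof (rule key[OF M r cb])
    show "continuous_on {-1..1} g" unfolding g_def by (intro continuous_intros)
    show "continuous_on {-1..1} h" unfolding h_def by (intro continuous_intros)
    show "\<bar>g x\<bar> \<le> h x" for x
      using amgm[of "cf a * legendre (Suc a) x" "cf b * legendre (Suc b) x"]
      unfolding g_def h_def by (simp add: power_mult_distrib mult_ac add_divide_distrib)
    fix k assume k: "k < b - a"
    have "integral {-1..1} (\<lambda>x. legendre k x * g x) =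
        integral {-1..1} (\<lambda>x. (cf a * cf b) * (poly (lpoly k * lpoly (Suc a)) x * legendre (Suc b) x))"
      unfolding g_def by (rule integral_cong) (simp add: poly_lpoly mult_ac)
    also have "\<dots> = (cf a * cf b) * integral {-1..1} (\<lambda>x. poly (lpoly k * lpoly (Suc a)) x * legendre (Suc b) x)"
      by simp
    also have "\<dots> = 0"
    proof -
      have "degree (lpoly k * lpoly (Suc a)) \<le> k + Suc a"
        using degree_mult_le[of "lpoly k" "lpoly (Suc a)"] degree_lpoly[of k] degree_lpoly[of "Suc a"] by linarith
      then have "degree (lpoly k * lpoly (Suc a)) < Suc b" using k ab by linarith
      then have z: "integral {-1..1} (\<lambda>x. poly (lpoly k * lpoly (Suc a)) x * legendre (Suc b) x) = 0"
        by (rule poly_orth)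
      show ?thesis by (simp only: z mult_zero_right)
    qed
    finally show "integral {-1..1} (\<lambda>x. legendre k x * g x) = 0" .
  qed
  then show ?thesis unfolding eq hi by simp
qed

lemma bs_bound: assumes x: "x \<in> {-1..1}" shows "\<bar>bs_eta (Suc (Suc a)) x\<bar> \<le> 1"
proof -
  have "\<bar>legendre a x - legendre (Suc (Suc a)) x\<bar> \<le> 2"
    using leg_bound[OF x, of a] leg_bound[OF x, of "Suc (Suc a)"] by linarith
  moreover have "sqrt (4 * real (Suc (Suc a)) - 2) \<ge> 2"
    by (rule real_le_rsqrt) (simp add: power2_eq_square)
  ultimately show ?thesis unfolding bs_eta_def by (simp add: abs_div divide_le_eq_1)
qed

lemma mass_bound:
  fixes c :: "nat \<Rightarrow> real" and M r :: real
  assumes M: "M \<ge> 0" and r: "0 \<le> r" "r < 1" and cb: "\<And>k. \<bar>c k\<bar> \<le> M * r ^ k"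
    and ab: "a \<le> b"
  shows "\<bar>integral {-1..1} (\<lambda>x. legendre_series c x * bs_eta (Suc (Suc a)) x * bs_eta (Suc (Suc b)) x)\<bar>
     \<le> M * r ^ (b - a - 2) / (1 - r) * 2"
proof -
  define g where "g x = bs_eta (Suc (Suc a)) x * bs_eta (Suc (Suc b)) x" for x
  define sa where "sa = sqrt (4 * real (Suc (Suc a)) - 2)"
  define sb where "sb = sqrt (4 * real (Suc (Suc b)) - 2)"
  have sa0: "sa \<noteq> 0" "sb \<noteq> 0" unfolding sa_def sb_def by simp_all
  have eq: "(\<lambda>x. legendre_series c x * bs_eta (Suc (Suc a)) x * bs_eta (Suc (Suc b)) x)
      = (\<lambda>x. legendre_series c x * g x)"
    unfolding g_def by (simp add: fun_eq_iff mult_ac)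
  have "\<bar>integral {-1..1} (\<lambda>x. legendre_series c x * g x)\<bar> \<le> M * r ^ (b - a - 2) / (1 - r) * integral {-1..1} (\<lambda>x::real. 1::real)"
  proof (rule key[OF M r cb])
    show "continuous_on {-1..1} g" unfolding g_def bs_eta_def by (intro continuous_intros) auto
    show "continuous_on {-1..1} (\<lambda>x. 1::real)" by (intro continuous_intros)
    show "\<bar>g x\<bar> \<le> 1" if x: "x \<in> {-1..1}" for x
    proof -
      have "\<bar>bs_eta (Suc (Suc a)) x\<bar> * \<bar>bs_eta (Suc (Suc b)) x\<bar> \<le> 1 * 1"
        using bs_bound[OF x, of a] bs_bound[OF x, of b] by (intro mult_mono) auto
      then show ?thesis unfolding g_def by (simp add: abs_mult)
    qed
    fix k assume k: "k < b - a - 2"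
    define q where "q = lpoly k * (lpoly a - lpoly (Suc (Suc a)))"
    have "integral {-1..1} (\<lambda>x. legendre k x * g x) =
        integral {-1..1} (\<lambda>x. (1 / (sa * sb)) * (poly q x * legendre b x) - (1 / (sa * sb)) * (poly q x * legendre (Suc (Suc b)) x))"
      unfolding g_def bs_eta_def q_def sa_def[symmetric] sb_def[symmetric]
      by (rule integral_cong) (simp add: sa0 poly_lpoly divide_inverse algebra_simps del: lpoly.simps)
    also have "\<dots> = (1 / (sa * sb)) * integral {-1..1} (\<lambda>x. poly q x * legendre b x)
         - (1 / (sa * sb)) * integral {-1..1} (\<lambda>x. poly q x * legendre (Suc (Suc b)) x)"
      by (subst integral_diff) (auto intro!: int11 continuous_intros simp: sa0)
    also have "\<dots> = 0"
    proof -
      have "degree (lpoly a - lpoly (Suc (Suc a))) \<le> Suc (Suc a)"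
        using degree_lpoly[of a] degree_lpoly[of "Suc (Suc a)"] by (intro degree_diff_le) auto
      then have "degree q \<le> k + Suc (Suc a)"
        unfolding q_def using degree_mult_le[of "lpoly k" "lpoly a - lpoly (Suc (Suc a))"] degree_lpoly[of k] by linarith
      then have d: "degree q < b" "degree q < Suc (Suc b)" using k ab by linarith+
      have z: "integral {-1..1} (\<lambda>x. poly q x * legendre b x) = 0"
          "integral {-1..1} (\<lambda>x. poly q x * legendre (Suc (Suc b)) x) = 0"
        using poly_orth[OF d(1)] poly_orth[OF d(2)] by auto
      show ?thesis by (simp only: z mult_zero_right diff_self)
    qed
    finally show "integral {-1..1} (\<lambda>x. legendre k x * g x) = 0" .
  qed
  then show ?thesis unfolding eq by simp
qed

lemma bound_le:
  fixes \<nu> \<sigma> :: "nat \<Rightarrow> real" and M r :: real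
  assumes M: "M \<ge> 0" and r: "0 < r" "r < 1"
    and cn: "\<And>k. \<bar>\<nu> k\<bar> \<le> M * r ^ k" and cs: "\<And>k. \<bar>\<sigma> k\<bar> \<le> M * r ^ k"
    and ab: "a \<le> b"
  shows "\<bar>a_entry \<nu> \<sigma> (Suc (Suc a)) (Suc (Suc b))\<bar> \<le> M / (1 - r) * (1 + 2 / r^2) * r ^ (b - a)"
proof -
  have r0: "0 \<le> r" using r by simp
  have s: "\<bar>integral {-1..1} (\<lambda>x. legendre_series \<nu> x * deriv (bs_eta (Suc (Suc a))) x * deriv (bs_eta (Suc (Suc b))) x)\<bar>
     \<le> M * r ^ (b - a) / (1 - r)" by (rule stiff_bound[OF M r0 r(2) cn ab])
  have m: "\<bar>integral {-1..1} (\<lambda>x. legendre_series \<sigma> x * bs_eta (Suc (Suc a)) x * bs_eta (Suc (Suc b)) x)\<bar>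
     \<le> M * r ^ (b - a - 2) / (1 - r) * 2" by (rule mass_bound[OF M r0 r(2) cs ab])
  have "r ^ (b - a - 2 + 2) \<le> r ^ (b - a)"
    using r by (intro power_decreasing) auto
  then have "r ^ (b - a - 2) * r^2 \<le> r ^ (b - a)" by (simp only: power_add)
  then have p: "r ^ (b - a - 2) \<le> r ^ (b - a) / r^2"
    using r by (simp add: pos_le_divide_eq)
  have "M * r ^ (b - a - 2) / (1 - r) * 2 \<le> M * (r ^ (b - a) / r^2) / (1 - r) * 2"
    using M r p by (intro mult_right_mono divide_right_mono mult_left_mono) auto
  have "\<bar>a_entry \<nu> \<sigma> (Suc (Suc a)) (Suc (Suc b))\<bar> \<le> M * r ^ (b - a) / (1 - r) + M * (r ^ (b - a) / r^2) / (1 - r) * 2"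
    unfolding a_entry_def using s m \<open>M * r ^ (b - a - 2) / (1 - r) * 2 \<le> _\<close> by linarith
  also have "\<dots> = M / (1 - r) * (1 + 2 / r^2) * r ^ (b - a)"
    by (simp add: divide_inverse algebra_simps)
  finally show ?thesis .
qed

lemma a_entry_sym: "a_entry \<nu> \<sigma> m n = a_entry \<nu> \<sigma> n m"
  unfolding a_entry_def by (simp add: mult_ac)

theorem mainTheorem4:
  fixes \<eta> C\<^sub>\<eta> :: real
  assumes "\<eta> > 0" and "C\<^sub>\<eta> > 0"
  shows "\<exists>C > 0. \<forall>\<nu> \<sigma> :: nat \<Rightarrow> real.
           (\<forall>k. \<bar>\<nu> k\<bar> \<le> C\<^sub>\<eta> * exp (- \<eta> * real k) \<and> \<bar>\<sigma> k\<bar> \<le> C\<^sub>\<eta> * exp (- \<eta> * real k)) \<longrightarrow>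
           (\<forall>m n. 2 \<le> m \<longrightarrow> 2 \<le> n \<longrightarrow>
              \<bar>a_entry \<nu> \<sigma> m n\<bar> \<le> C * exp (- \<eta> * \<bar>real n - real m\<bar>))"
proof -
  define r where "r = exp (- \<eta>)"
  have r: "0 < r" "r < 1" unfolding r_def using assms by auto
  define C where "C = C\<^sub>\<eta> / (1 - r) * (1 + 2 / r^2)"
  have "0 < 1 + 2 / r^2" using r by (intro add_pos_pos) auto
  then have Cpos: "C > 0" unfolding C_def using r assms by (intro mult_pos_pos divide_pos_pos) auto
  have ex: "exp (- \<eta> * real k) = r ^ k" for k
    unfolding r_def using exp_of_nat_mult[of k "- \<eta>"] by (simp add: mult.commute)
  show ?thesis
  proof (intro exI[of _ C] conjI allI impI Cpos)
    fix \<nu> \<sigma> :: "nat \<Rightarrow> real" and m n :: nat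
    assume hyp: "\<forall>k. \<bar>\<nu> k\<bar> \<le> C\<^sub>\<eta> * exp (- \<eta> * real k) \<and> \<bar>\<sigma> k\<bar> \<le> C\<^sub>\<eta> * exp (- \<eta> * real k)"
      and m: "2 \<le> m" and n: "2 \<le> n"
    have cn: "\<bar>\<nu> k\<bar> \<le> C\<^sub>\<eta> * r ^ k" and cs: "\<bar>\<sigma> k\<bar> \<le> C\<^sub>\<eta> * r ^ k" for k
      using hyp ex by auto
    have M: "C\<^sub>\<eta> \<ge> 0" using assms by simp
    obtain a where a: "m = Suc (Suc a)" using m by (metis add_2_eq_Suc le_Suc_ex)
    obtain b where b: "n = Suc (Suc b)" using n by (metis add_2_eq_Suc le_Suc_ex)
    show "\<bar>a_entry \<nu> \<sigma> m n\<bar> \<le> C * exp (- \<eta> * \<bar>real n - real m\<bar>)"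
    proof (cases "a \<le> b")
      case True
      have "\<bar>real n - real m\<bar> = real (b - a)" using True a b by auto
      then have "exp (- \<eta> * \<bar>real n - real m\<bar>) = r ^ (b - a)" using ex by simp
      then show ?thesis using bound_le[OF M r cn cs True] a b unfolding C_def by simp
    next
      case False
      then have ba: "b \<le> a" by simp
      have "\<bar>real n - real m\<bar> = real (a - b)" using ba a b by auto
      then have "exp (- \<eta> * \<bar>real n - real m\<bar>) = r ^ (a - b)" using ex by simp
      then show ?thesis using bound_le[OF M r cn cs ba] a b a_entry_sym unfolding C_def by metis
    qed
  qed
qed

end
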